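(* Let $F$ be a field of characteristic $3$ and let $L=psl_3(F)$. Then no maximal subalgebra of $L$ is semi-modular in $L$.
   Context: $psl_3(F)=sl_3(F)/F I$ (in characteristic 3 the identity matrix $I$ lies in $sl_3(F)$ and spans its centre). For subalgebras $U,B$ of a Lie algebra $L$, $\langle U,B\rangle$ denotes the subalgebra generated by $U\cup B$. A subalgebra $B$ covers a subalgebra $A$ if $A$ is a maximal subalgebra of $B$. $U$ is upper modular (um) in $L$ if whenever $B$ is a subalgebra of $L$ which covers $U\cap B$, then $\langle U,B\rangle$ covers $U$; $U$ is lower modular (lm) in $L$ if whenever $B$ is a subalgebra of $L$ such that $\langle U,B\rangle$ covers $U$, then $B$ covers $U\cap B$; $U$ is semi-modular (sm) in $L$ if it is both um and lm in $L$. *)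

theory Defs
  imports "HOL-Analysis.Analysis"
begin

text \<open>3x3 matrices over a field are modelled as the type 'a^3^3.
  sl_3(F) is the set of trace-zero matrices with the commutator bracket;
  psl_3(F) = sl_3(F)/F I is modelled as the set of cosets X + F I (X in sl_3(F)),
  with the induced vector space operations and bracket.\<close>

definition mtrace :: "'a::field ^3^3 \<Rightarrow> 'a" where
  "mtrace A = (\<Sum>i\<in>UNIV. A $ i $ i)"

definition msc :: "'a::field \<Rightarrow> 'a^3^3 \<Rightarrow> 'a^3^3" where
  "msc c A = (\<chi> i j. c * A $ i $ j)"

definition mbr :: "'a::field ^3^3 \<Rightarrow> 'a^3^3 \<Rightarrow> 'a^3^3" where
  "mbr A B = A ** B - B ** A"

definition sl3 :: "('a::field ^3^3) set" where
  "sl3 = {A. mtrace A = 0}"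

definition pcoset :: "'a::field ^3^3 \<Rightarrow> ('a^3^3) set" where
  "pcoset X = {X + mat c | c. True}"

definition psl3 :: "('a::field ^3^3) set set" where
  "psl3 = pcoset ` sl3"

definition pzero :: "('a::field ^3^3) set" where
  "pzero = pcoset 0"

definition padd :: "('a::field ^3^3) set \<Rightarrow> ('a^3^3) set \<Rightarrow> ('a^3^3) set" where
  "padd P Q = {X + Y | X Y. X \<in> P \<and> Y \<in> Q}"

definition psc :: "'a::field \<Rightarrow> ('a^3^3) set \<Rightarrow> ('a^3^3) set" where
  "psc c P = {msc c X + mat d | X d. X \<in> P}"

definition pbr :: "('a::field ^3^3) set \<Rightarrow> ('a^3^3) set \<Rightarrow> ('a^3^3) set" where
  "pbr P Q = {mbr X Y + mat d | X Y d. X \<in> P \<and> Y \<in> Q}"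

definition psl3_subalg :: "('a::field ^3^3) set set \<Rightarrow> bool" where
  "psl3_subalg U \<longleftrightarrow> U \<subseteq> psl3 \<and> pzero \<in> U
     \<and> (\<forall>P\<in>U. \<forall>Q\<in>U. padd P Q \<in> U)
     \<and> (\<forall>c. \<forall>P\<in>U. psc c P \<in> U)
     \<and> (\<forall>P\<in>U. \<forall>Q\<in>U. pbr P Q \<in> U)"

definition psl3_gen :: "('a::field ^3^3) set set \<Rightarrow> ('a^3^3) set set" where
  "psl3_gen S = \<Inter> {T. psl3_subalg T \<and> S \<subseteq> T}"

definition psl3_maxsub :: "('a::field ^3^3) set set \<Rightarrow> ('a^3^3) set set \<Rightarrow> bool" where
  "psl3_maxsub A B \<longleftrightarrow> psl3_subalg A \<and> psl3_subalg B \<and> A \<subset> B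
     \<and> \<not> (\<exists>C. psl3_subalg C \<and> A \<subset> C \<and> C \<subset> B)"

definition psl3_covers :: "('a::field ^3^3) set set \<Rightarrow> ('a^3^3) set set \<Rightarrow> bool" where
  "psl3_covers B A \<longleftrightarrow> psl3_maxsub A B"

definition psl3_um :: "('a::field ^3^3) set set \<Rightarrow> bool" where
  "psl3_um U \<longleftrightarrow> (\<forall>B. psl3_subalg B \<and> psl3_covers B (U \<inter> B)
      \<longrightarrow> psl3_covers (psl3_gen (U \<union> B)) U)"

definition psl3_lm :: "('a::field ^3^3) set set \<Rightarrow> bool" where
  "psl3_lm U \<longleftrightarrow> (\<forall>B. psl3_subalg B \<and> psl3_covers (psl3_gen (U \<union> B)) U
      \<longrightarrow> psl3_covers B (U \<inter> B))"

definition psl3_sm :: "('a::field ^3^3) set set \<Rightarrow> bool" where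
  "psl3_sm U \<longleftrightarrow> psl3_um U \<and> psl3_lm U"

end

theory Submission
  imports Defs
begin

definition E :: "3 \<Rightarrow> 3 \<Rightarrow> 'a::field^3^3" where
  "E i j = (\<chi> a b. if a = i \<and> b = j then 1 else 0)"

lemma Emult: "(E i j ** E k l :: 'a::field^3^3) = (if j = k then E i l else 0)"
proof -
  have "\<And>a b. (\<Sum>c\<in>UNIV. (E i j :: 'a^3^3) $ a $ c * E k l $ c $ b) = (if j = k then E i l else 0) $ a $ b"
  proof -
    fix a b
    have "(\<Sum>c\<in>UNIV. (E i j :: 'a^3^3) $ a $ c * E k l $ c $ b) = (\<Sum>c\<in>UNIV. if c = j then (if a = i \<and> j = k \<and> b = l then 1 else 0) else 0)"
      by (rule sum.cong) (auto simp: E_def)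
    also have "\<dots> = (if j = k then E i l else 0) $ a $ b" by (simp add: E_def)
    finally show "?thesis a b" .
  qed
  then show ?thesis by (simp add: vec_eq_iff matrix_matrix_mult_def)
qed

lemma msc_mult_left: "msc c A ** B = msc c (A ** B)"
  by (simp add: vec_eq_iff matrix_matrix_mult_def msc_def sum_distrib_left mult.assoc)
lemma msc_mult_right: "A ** msc c B = msc c (A ** B)"
  by (simp add: vec_eq_iff matrix_matrix_mult_def msc_def sum_distrib_left ac_simps)
lemma mat_mult_left: "mat c ** A = msc c (A::'a::field^3^3)"
proof -
  have "\<And>a b. (\<Sum>k\<in>UNIV. (mat c :: 'a^3^3) $ a $ k * A $ k $ b) = (\<Sum>k\<in>UNIV. if k = a then c * A $ a $ b else 0)"
    by (rule sum.cong) (auto simp: mat_def)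
  then show ?thesis by (simp add: vec_eq_iff matrix_matrix_mult_def msc_def)
qed
lemma mat_mult_right: "A ** mat c = msc c (A::'a::field^3^3)"
proof -
  have "\<And>a b. (\<Sum>k\<in>UNIV. A $ a $ k * (mat c :: 'a^3^3) $ k $ b) = (\<Sum>k\<in>UNIV. if k = b then c * A $ a $ b else 0)"
    by (rule sum.cong) (auto simp: mat_def)
  then show ?thesis by (simp add: vec_eq_iff matrix_matrix_mult_def msc_def)
qed
lemma msc_add: "msc c (A + B) = msc c A + msc c B"
  by (simp add: vec_eq_iff msc_def algebra_simps)
lemma msc_zero[simp]: "msc c 0 = 0" by (simp add: vec_eq_iff msc_def)
lemma msc_msc[simp]: "msc c (msc d A) = msc (c*d) A" by (simp add: vec_eq_iff msc_def)
lemma msc_one[simp]: "msc 1 A = A" by (simp add: vec_eq_iff msc_def)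
lemma msc_0[simp]: "msc 0 A = 0" by (simp add: vec_eq_iff msc_def)
lemma mat_add: "mat (a + b) = mat a + (mat b :: 'a::field^3^3)"
  by (simp add: vec_eq_iff mat_def)
lemma msc_mat: "msc c (mat d) = (mat (c*d) :: 'a::field^3^3)"
  by (simp add: vec_eq_iff mat_def msc_def)
lemma matrix_add_rdistrib: "((B + C) ** A) = (B ** A) + (C ** A :: 'a::field^3^3)"
  by (simp add: vec_eq_iff matrix_matrix_mult_def sum.distrib algebra_simps)

lemma mbr_shift: "mbr (X + mat a) (Y + mat b) = mbr X (Y::'a::field^3^3)"
  by (simp add: mbr_def matrix_add_ldistrib matrix_add_rdistrib mat_mult_left mat_mult_right msc_mat msc_add mat_add mult.commute)

lemma mtrace_E: "i \<noteq> j \<Longrightarrow> mtrace (E i j :: 'a::field^3^3) = 0"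
  unfolding mtrace_def E_def by (rule sum.neutral) auto
lemma mtrace_add: "mtrace (A + B) = mtrace A + mtrace B"
  by (simp add: mtrace_def sum.distrib)
lemma mtrace_msc: "mtrace (msc c A) = c * mtrace A"
  by (simp add: mtrace_def msc_def sum_distrib_left)
lemma mtrace_mbr: "mtrace (mbr A B) = 0"
proof -
  have "(\<Sum>i\<in>UNIV. \<Sum>k\<in>UNIV. B$i$k * A$k$i) = (\<Sum>i\<in>UNIV. \<Sum>k\<in>UNIV. A$i$k * (B$k$i :: 'a::field))"
    by (subst sum.swap) (simp add: mult.commute)
  then show ?thesis
    by (simp add: mtrace_def mbr_def matrix_matrix_mult_def sum_subtractf)
qed
lemma mtrace_mat3: "mtrace (mat c :: 'a::field^3^3) = of_nat 3 * c"
proof -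
  have "mtrace (mat c :: 'a::field^3^3) = c + c + c" by (simp add: mtrace_def mat_def sum_3)
  moreover have "(of_nat 3 :: 'a) * c = c + c + c"
    by (simp add: numeral_3_eq_3 distrib_right)
  ultimately show ?thesis by simp
qed
lemma mtrace_mat: "CHAR('a) = 3 \<Longrightarrow> mtrace (mat c :: 'a::field^3^3) = 0"
proof -
  assume h: "CHAR('a) = 3"
  have "(of_nat CHAR('a) :: 'a) = 0" by (rule of_nat_CHAR)
  then have "(of_nat 3 :: 'a) = 0" by (simp only: h)
  then show ?thesis by (simp only: mtrace_mat3 mult_zero_left)
qed

lemma mat_diff: "mat (a - b) = mat a - (mat b :: 'a::field^3^3)"
  by (simp add: vec_eq_iff mat_def)

lemma mem_pcoset_self: "X \<in> pcoset X"
  unfolding pcoset_def by (rule CollectI, rule exI[of _ 0]) simp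

lemma pcoset_eq: "pcoset X = pcoset Y \<longleftrightarrow> (\<exists>c. X = Y + mat c)"
proof
  assume "pcoset X = pcoset Y"
  then have "X \<in> pcoset Y" using mem_pcoset_self by metis
  then show "\<exists>c. X = Y + mat c" by (auto simp: pcoset_def)
next
  assume "\<exists>c. X = Y + mat c"
  then obtain c where c: "X = Y + mat c" by blast
  show "pcoset X = pcoset Y"
  proof (rule set_eqI)
    fix Z
    show "Z \<in> pcoset X \<longleftrightarrow> Z \<in> pcoset Y"
    proof
      assume "Z \<in> pcoset X"
      then obtain d where "Z = X + mat d" by (auto simp: pcoset_def)
      then have "Z = Y + mat (c + d)" by (simp add: c mat_add add.assoc)
      then show "Z \<in> pcoset Y" by (auto simp: pcoset_def)
    next
      assume "Z \<in> pcoset Y"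
      then obtain d where "Z = Y + mat d" by (auto simp: pcoset_def)
      then have "Z = X + mat (d - c)" by (simp add: c mat_diff)
      then show "Z \<in> pcoset X" by (auto simp: pcoset_def)
    qed
  qed
qed


lemma pcoset_mem: "Z \<in> pcoset X \<longleftrightarrow> (\<exists>c. Z = X + mat c)"
  by (auto simp: pcoset_def)

lemma padd_pcoset: "padd (pcoset X) (pcoset Y) = pcoset (X + Y)"
proof (rule set_eqI)
  fix Z show "Z \<in> padd (pcoset X) (pcoset Y) \<longleftrightarrow> Z \<in> pcoset (X + Y)"
  proof
    assume "Z \<in> padd (pcoset X) (pcoset Y)"
    then obtain a b where "Z = (X + mat a) + (Y + mat b)" by (auto simp: padd_def pcoset_mem)
    then have "Z = (X + Y) + mat (a + b)" by (simp add: mat_add algebra_simps)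
    then show "Z \<in> pcoset (X + Y)" by (auto simp: pcoset_mem)
  next
    assume "Z \<in> pcoset (X + Y)"
    then obtain c where "Z = (X + Y) + mat c" by (auto simp: pcoset_mem)
    then have "Z = (X + mat c) + (Y + mat 0)" by (simp add: algebra_simps)
    moreover have "X + mat c \<in> pcoset X" "Y + mat 0 \<in> pcoset Y" by (auto simp: pcoset_mem intro: exI[of _ 0] simp: vec_eq_iff mat_def)
    ultimately show "Z \<in> padd (pcoset X) (pcoset Y)" unfolding padd_def by blast
  qed
qed

lemma psc_pcoset: "psc c (pcoset X) = pcoset (msc c X)"
proof (rule set_eqI)
  fix Z show "Z \<in> psc c (pcoset X) \<longleftrightarrow> Z \<in> pcoset (msc c X)"
  proof
    assume "Z \<in> psc c (pcoset X)"
    then obtain a d where "Z = msc c (X + mat a) + mat d" by (auto simp: psc_def pcoset_mem)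
    then have "Z = msc c X + mat (c * a + d)" by (simp add: msc_add msc_mat mat_add add.assoc)
    then show "Z \<in> pcoset (msc c X)" by (auto simp: pcoset_mem)
  next
    assume "Z \<in> pcoset (msc c X)"
    then obtain d where "Z = msc c X + mat d" by (auto simp: pcoset_mem)
    moreover have "X \<in> pcoset X" by (rule mem_pcoset_self)
    ultimately show "Z \<in> psc c (pcoset X)" unfolding psc_def by blast
  qed
qed

lemma pbr_pcoset: "pbr (pcoset X) (pcoset Y) = pcoset (mbr X Y)"
proof (rule set_eqI)
  fix Z show "Z \<in> pbr (pcoset X) (pcoset Y) \<longleftrightarrow> Z \<in> pcoset (mbr X Y)"
  proof
    assume "Z \<in> pbr (pcoset X) (pcoset Y)"
    then obtain a b d where "Z = mbr (X + mat a) (Y + mat b) + mat d" by (auto simp: pbr_def pcoset_mem)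
    then have "Z = mbr X Y + mat d" by (simp add: mbr_shift)
    then show "Z \<in> pcoset (mbr X Y)" by (auto simp: pcoset_mem)
  next
    assume "Z \<in> pcoset (mbr X Y)"
    then obtain d where "Z = mbr X Y + mat d" by (auto simp: pcoset_mem)
    moreover have "X \<in> pcoset X" "Y \<in> pcoset Y" by (rule mem_pcoset_self)+
    ultimately show "Z \<in> pbr (pcoset X) (pcoset Y)" unfolding pbr_def by blast
  qed
qed

lemma pcoset_in_psl3: "mtrace X = 0 \<Longrightarrow> pcoset X \<in> psl3"
  by (simp add: psl3_def sl3_def)

lemma psl3_elem: "P \<in> psl3 \<Longrightarrow> \<exists>X. mtrace X = 0 \<and> P = pcoset X"
  by (auto simp: psl3_def sl3_def)

lemma subalg_add: "psl3_subalg M \<Longrightarrow> pcoset X \<in> M \<Longrightarrow> pcoset Y \<in> M \<Longrightarrow> pcoset (X + Y) \<in> M"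
  unfolding psl3_subalg_def by (metis padd_pcoset)
lemma subalg_sc: "psl3_subalg M \<Longrightarrow> pcoset X \<in> M \<Longrightarrow> pcoset (msc c X) \<in> M"
  unfolding psl3_subalg_def by (metis psc_pcoset)
lemma subalg_br: "psl3_subalg M \<Longrightarrow> pcoset X \<in> M \<Longrightarrow> pcoset Y \<in> M \<Longrightarrow> pcoset (mbr X Y) \<in> M"
  unfolding psl3_subalg_def by (metis pbr_pcoset)

lemma gen_subalg:
  assumes "psl3_subalg (psl3 :: ('a::field^3^3) set set)" "S \<subseteq> psl3"
  shows "psl3_subalg (psl3_gen S)" "S \<subseteq> psl3_gen S" "psl3_gen S \<subseteq> (psl3 :: ('a::field^3^3) set set)"
proof -
  have fam: "psl3 \<in> {T. psl3_subalg T \<and> S \<subseteq> T}" using assms by auto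
  show "psl3_gen S \<subseteq> psl3" unfolding psl3_gen_def using fam by blast
  show "S \<subseteq> psl3_gen S" unfolding psl3_gen_def by blast
  show "psl3_subalg (psl3_gen S)"
    unfolding psl3_subalg_def
  proof (intro conjI ballI allI)
    show "psl3_gen S \<subseteq> psl3" unfolding psl3_gen_def using fam by blast
    show "pzero \<in> psl3_gen S" unfolding psl3_gen_def psl3_subalg_def by blast
    fix P Q assume "P \<in> psl3_gen S" "Q \<in> psl3_gen S"
    then show "padd P Q \<in> psl3_gen S" "pbr P Q \<in> psl3_gen S"
      unfolding psl3_gen_def psl3_subalg_def by blast+
  next
    fix c P assume "P \<in> psl3_gen S"
    then show "psc c P \<in> psl3_gen S"
      unfolding psl3_gen_def psl3_subalg_def by blast
  qed
qed

lemma msc_addc: "msc (a + b) A = msc a A + msc b A"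
  by (simp add: vec_eq_iff msc_def algebra_simps)

lemma mbr_comb_zero:
  assumes "mbr A B = (0 :: 'a::field^3^3)"
  shows "mbr (msc a A + msc b B) (msc a' A + msc b' B) = 0"
proof -
  have BA: "B ** A = A ** B" using assms by (simp add: mbr_def)
  show ?thesis
    unfolding mbr_def
    by (simp add: matrix_add_ldistrib matrix_add_rdistrib msc_mult_left msc_mult_right BA)
       (simp add: vec_eq_iff msc_def algebra_simps)
qed

lemma plane_subalg:
  assumes "mtrace A = 0" "mtrace B = 0" "mbr A B = (0 :: 'a::field^3^3)"
  shows "psl3_subalg {pcoset (msc a A + msc b B) | a b. True}"
  unfolding psl3_subalg_def
proof (intro conjI ballI allI)
  let ?P = "{pcoset (msc a A + msc b B) | a b. True}"
  show "?P \<subseteq> psl3"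
    using assms by (auto intro!: pcoset_in_psl3 simp: mtrace_add mtrace_msc)
  have "pzero = pcoset (msc 0 A + msc 0 B)" by (simp add: pzero_def)
  then show "pzero \<in> ?P" by blast
  fix P Q assume "P \<in> ?P" "Q \<in> ?P"
  then obtain a b a' b' where P: "P = pcoset (msc a A + msc b B)" and Q: "Q = pcoset (msc a' A + msc b' B)"
    by blast
  have "padd P Q = pcoset (msc (a + a') A + msc (b + b') B)"
    by (simp add: P Q padd_pcoset msc_addc algebra_simps)
  then show "padd P Q \<in> ?P" by blast
  have "pbr P Q = pcoset (msc 0 A + msc 0 B)"
    by (simp add: P Q pbr_pcoset mbr_comb_zero[OF assms(3)])
  then show "pbr P Q \<in> ?P" by blast
next
  let ?P = "{pcoset (msc a A + msc b B) | a b. True}"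
  fix c P assume "P \<in> ?P"
  then obtain a b where P: "P = pcoset (msc a A + msc b B)" by blast
  have "psc c P = pcoset (msc (c*a) A + msc (c*b) B)"
    by (simp add: P psc_pcoset msc_add)
  then show "psc c P \<in> ?P" by blast
qed

lemma plane_hit:
  fixes M :: "('a::field^3^3) set set"
  assumes mx: "psl3_maxsub M psl3" and lm: "psl3_lm M"
    and tA: "mtrace A = 0" and tB: "mtrace B = 0" and AB: "mbr A B = 0"
    and indA: "\<And>c. A \<noteq> mat c" and indB: "\<And>a c. B \<noteq> msc a A + mat c"
  shows "\<exists>a b. (a \<noteq> 0 \<or> b \<noteq> 0) \<and> pcoset (msc a A + msc b B) \<in> M"
proof (rule ccontr)
  assume nh: "\<not> ?thesis"
  define P where "P = {pcoset (msc a A + msc b B) | a b. True}"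
  have sP: "psl3_subalg P" unfolding P_def by (rule plane_subalg[OF tA tB AB])
  have sM: "psl3_subalg M" and sL: "psl3_subalg (psl3 :: ('a^3^3) set set)" and MP: "M \<subset> psl3"
    using mx by (auto simp: psl3_maxsub_def)
  have nC: "\<not> (\<exists>C. psl3_subalg C \<and> M \<subset> C \<and> C \<subset> psl3)" using mx by (simp add: psl3_maxsub_def)
  have "pcoset (msc 1 A + msc 0 B) \<in> P" unfolding P_def by blast
  moreover have "pcoset (msc 1 A + msc 0 B) \<notin> M" using nh one_neq_zero by blast
  ultimately have PnM: "\<not> P \<subseteq> M" by blast
  have MPsub: "M \<union> P \<subseteq> psl3" using sM sP MP by (auto simp: psl3_subalg_def)
  note g = gen_subalg[OF sL MPsub]
  let ?G = "psl3_gen (M \<union> P)"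
  have "M \<subset> ?G" using g(2) PnM by blast
  then have "?G = psl3" using nC g(1) g(3) by blast
  then have "psl3_covers ?G M" using mx by (simp add: psl3_covers_def)
  then have cov: "psl3_maxsub (M \<inter> P) P" using lm sP by (simp add: psl3_lm_def psl3_covers_def)
  define C where "C = {pcoset (msc a A + msc b 0) | a b. True}"
  have sC: "psl3_subalg C" unfolding C_def by (rule plane_subalg) (use tA in \<open>auto simp: mtrace_def mbr_def\<close>)
  have MPz: "M \<inter> P \<subseteq> {pzero}"
  proof
    fix Q assume "Q \<in> M \<inter> P"
    then obtain a b where "Q = pcoset (msc a A + msc b B)" "Q \<in> M" unfolding P_def by blast
    then show "Q \<in> {pzero}" using nh by (cases "a = 0 \<and> b = 0") (auto simp: pzero_def)
  qed
  have "pzero \<in> C" using sC by (simp add: psl3_subalg_def)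
  moreover have AC: "pcoset (msc 1 A + msc 0 (0::'a^3^3)) \<in> C" unfolding C_def by blast
  moreover have "pcoset (msc 1 A + msc 0 (0::'a^3^3)) \<noteq> pzero"
    using indA by (auto simp: pzero_def pcoset_eq)
  ultimately have s1: "M \<inter> P \<subset> C" using MPz by blast
  have "C \<subseteq> P"
  proof
    fix Q assume "Q \<in> C"
    then obtain a b where "Q = pcoset (msc a A + msc b (0::'a^3^3))" unfolding C_def by blast
    then have "Q = pcoset (msc a A + msc 0 B)" by simp
    then show "Q \<in> P" unfolding P_def by blast
  qed
  moreover have "pcoset (msc 0 A + msc 1 B) \<in> P" unfolding P_def by blast
  moreover have "pcoset (msc 0 A + msc 1 B) \<notin> C"
    unfolding C_def using indB by (auto simp: pcoset_eq)
  ultimately have s2: "C \<subset> P" by blast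
  show False using cov sC s1 s2 by (auto simp: psl3_maxsub_def)
qed

lemma E_entry: "(E i j :: 'a::field^3^3) $ a $ b = (if a = i \<and> b = j then 1 else 0)"
  by (simp add: E_def)

lemma br_calc:
  assumes "i \<noteq> j" "j \<noteq> k" "i \<noteq> k"
  shows "mbr (msc p (E i k) + E i j) (msc q (E i k) + E j k) = (E i k :: 'a::field^3^3)"
  using assms
  by (simp add: mbr_def matrix_add_ldistrib matrix_add_rdistrib msc_mult_left msc_mult_right Emult)

lemma triple:
  fixes M :: "('a::field^3^3) set set"
  assumes mx: "psl3_maxsub M psl3" and lm: "psl3_lm M"
    and d: "i \<noteq> j" "j \<noteq> k" "i \<noteq> k"
  shows "pcoset (E i k :: 'a^3^3) \<in> M"
proof -
  have sM: "psl3_subalg M" using mx by (simp add: psl3_maxsub_def)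
  have indA: "\<And>c. (E i k :: 'a^3^3) \<noteq> mat c"
    using d by (auto simp: vec_eq_iff E_entry mat_def)
  have h1: "\<exists>a b. (a \<noteq> 0 \<or> b \<noteq> 0) \<and> pcoset (msc a (E i k) + msc b (E i j)) \<in> M"
  proof (rule plane_hit[OF mx lm])
    show "mtrace (E i k :: 'a^3^3) = 0" "mtrace (E i j :: 'a^3^3) = 0" using d by (simp_all add: mtrace_E)
    show "mbr (E i k) (E i j :: 'a^3^3) = 0" using d by (simp add: mbr_def Emult)
    show "\<And>c. (E i k :: 'a^3^3) \<noteq> mat c" by (rule indA)
    show "\<And>a c. (E i j :: 'a^3^3) \<noteq> msc a (E i k) + mat c"
    proof
      fix a c assume "(E i j :: 'a^3^3) = msc a (E i k) + mat c"
      then have "(E i j :: 'a^3^3) $ i $ j = (msc a (E i k) + mat c) $ i $ j" by simp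
      then show False using d by (simp add: E_entry msc_def mat_def)
    qed
  qed
  have h2: "\<exists>a b. (a \<noteq> 0 \<or> b \<noteq> 0) \<and> pcoset (msc a (E i k) + msc b (E j k)) \<in> M"
  proof (rule plane_hit[OF mx lm])
    show "mtrace (E i k :: 'a^3^3) = 0" "mtrace (E j k :: 'a^3^3) = 0" using d by (simp_all add: mtrace_E)
    show "mbr (E i k) (E j k :: 'a^3^3) = 0" using d by (simp add: mbr_def Emult)
    show "\<And>c. (E i k :: 'a^3^3) \<noteq> mat c" by (rule indA)
    show "\<And>a c. (E j k :: 'a^3^3) \<noteq> msc a (E i k) + mat c"
    proof
      fix a c assume "(E j k :: 'a^3^3) = msc a (E i k) + mat c"
      then have "(E j k :: 'a^3^3) $ j $ k = (msc a (E i k) + mat c) $ j $ k" by simp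
      then show False using d by (simp add: E_entry msc_def mat_def)
    qed
  qed
  obtain a b where ab: "a \<noteq> 0 \<or> b \<noteq> 0" "pcoset (msc a (E i k) + msc b (E i j)) \<in> M" using h1 by blast
  obtain a' b' where ab': "a' \<noteq> 0 \<or> b' \<noteq> 0" "pcoset (msc a' (E i k) + msc b' (E j k)) \<in> M" using h2 by blast
  show ?thesis
  proof (cases "b = 0")
    case True
    then have "a \<noteq> 0" using ab by simp
    have "msc (inverse a) (msc a (E i k) + msc b (E i j)) = (E i k :: 'a^3^3)"
      using True \<open>a \<noteq> 0\<close> by (simp add: msc_add)
    then show ?thesis using subalg_sc[OF sM ab(2), of "inverse a"] by simp
  next
    case bnz: False
    have X: "pcoset (msc (a / b) (E i k) + E i j :: 'a^3^3) \<in> M"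
    proof -
      have "msc (inverse b) (msc a (E i k) + msc b (E i j)) = (msc (a / b) (E i k) + E i j :: 'a^3^3)"
        using bnz by (simp add: msc_add field_simps)
      then show ?thesis using subalg_sc[OF sM ab(2), of "inverse b"] by simp
    qed
    show ?thesis
    proof (cases "b' = 0")
      case True
      then have "a' \<noteq> 0" using ab' by simp
      have "msc (inverse a') (msc a' (E i k) + msc b' (E j k)) = (E i k :: 'a^3^3)"
        using True \<open>a' \<noteq> 0\<close> by (simp add: msc_add)
      then show ?thesis using subalg_sc[OF sM ab'(2), of "inverse a'"] by simp
    next
      case bnz': False
      have Y: "pcoset (msc (a' / b') (E i k) + E j k :: 'a^3^3) \<in> M"
      proof -
        have "msc (inverse b') (msc a' (E i k) + msc b' (E j k)) = (msc (a' / b') (E i k) + E j k :: 'a^3^3)"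
          using bnz' by (simp add: msc_add field_simps)
        then show ?thesis using subalg_sc[OF sM ab'(2), of "inverse b'"] by simp
      qed
      show ?thesis using subalg_br[OF sM X Y] by (simp add: br_calc[OF d])
    qed
  qed
qed

lemma H_eq: "mbr (E 1 2) (E 2 1) = (E 1 1 - E 2 2 :: 'a::field^3^3)"
  by (simp add: mbr_def Emult)

lemma decomp:
  fixes X :: "'a::field^3^3"
  assumes three: "(3::'a) = 0" and tr: "mtrace X = 0"
  shows "X = (msc (X$1$2) (E 1 2) + msc (X$1$3) (E 1 3) + msc (X$2$1) (E 2 1) + msc (X$2$3) (E 2 3)
     + msc (X$3$1) (E 3 1) + msc (X$3$2) (E 3 2) + msc (X$1$1 - X$3$3) (mbr (E 1 2) (E 2 1))) + mat (X$3$3)"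
proof -
  have t: "X$1$1 + X$2$2 + X$3$3 = 0" using tr by (simp add: mtrace_def sum_3)
  have "X$3$3 + X$3$3 + X$3$3 = 3 * X$3$3" by (simp add: algebra_simps)
  then have t3: "X$3$3 + X$3$3 + X$3$3 = 0" using three by simp
  have "X$2$2 = - (X$1$1 - X$3$3) + X$3$3"
    using t t3 by algebra
  then show ?thesis
    unfolding H_eq by (simp add: vec_eq_iff forall_3 E_entry msc_def mat_def)
qed

theorem proposition2p5:
  assumes "CHAR('a::field) = 3"
  shows "\<not> (\<exists>M :: ('a ^3^3) set set. psl3_maxsub M psl3 \<and> psl3_sm M)"
proof
  assume "\<exists>M :: ('a ^3^3) set set. psl3_maxsub M psl3 \<and> psl3_sm M"
  then obtain M :: "('a ^3^3) set set" where mx: "psl3_maxsub M psl3" and sm: "psl3_sm M" by blast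
  have lm: "psl3_lm M" using sm by (simp add: psl3_sm_def)
  have sM: "psl3_subalg M" and MP: "M \<subset> psl3" using mx by (auto simp: psl3_maxsub_def)
  have three: "(3::'a) = 0"
  proof -
    have "(of_nat CHAR('a) :: 'a) = 0" by (rule of_nat_CHAR)
    then show ?thesis by (simp add: assms)
  qed
  have e12: "pcoset (E 1 2 :: 'a^3^3) \<in> M" by (rule triple[OF mx lm, of 1 3 2]) simp_all
  have e13: "pcoset (E 1 3 :: 'a^3^3) \<in> M" by (rule triple[OF mx lm, of 1 2 3]) simp_all
  have e21: "pcoset (E 2 1 :: 'a^3^3) \<in> M" by (rule triple[OF mx lm, of 2 3 1]) simp_all
  have e23: "pcoset (E 2 3 :: 'a^3^3) \<in> M" by (rule triple[OF mx lm, of 2 1 3]) simp_all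
  have e31: "pcoset (E 3 1 :: 'a^3^3) \<in> M" by (rule triple[OF mx lm, of 3 2 1]) simp_all
  have e32: "pcoset (E 3 2 :: 'a^3^3) \<in> M" by (rule triple[OF mx lm, of 3 1 2]) simp_all
  have h: "pcoset (mbr (E 1 2) (E 2 1) :: 'a^3^3) \<in> M" by (rule subalg_br[OF sM e12 e21])
  have "psl3 \<subseteq> M"
  proof
    fix P :: "('a^3^3) set" assume "P \<in> psl3"
    then obtain X where tr: "mtrace X = 0" and P: "P = pcoset X" using psl3_elem by blast
    let ?Y = "msc (X$1$2) (E 1 2) + msc (X$1$3) (E 1 3) + msc (X$2$1) (E 2 1) + msc (X$2$3) (E 2 3)
     + msc (X$3$1) (E 3 1) + msc (X$3$2) (E 3 2) + msc (X$1$1 - X$3$3) (mbr (E 1 2) (E 2 1)) :: 'a^3^3"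
    have "pcoset ?Y \<in> M"
      by (intro subalg_add[OF sM] subalg_sc[OF sM] e12 e13 e21 e23 e31 e32 h)
    moreover have "pcoset X = pcoset ?Y"
      using decomp[OF three tr] pcoset_eq by blast
    ultimately show "P \<in> M" using P by simp
  qed
  then show False using MP by blast
qed

end
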